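(* Fix an iteration index $t$ and an agent $p$. Let $w^{t+1},\lambda^t_p,z^t_p\in\mathbb{R}^{J\times K}$, $\rho^t>0$ and $\eta^t>0$ be given and independent of the data. For a dataset $\mathcal{D}$ and a noise vector $\xi\in\mathbb{R}^{J\times K}$ put $$G^t(z;\mathcal{D},\xi)=\langle f'_p(z^t_p;\mathcal{D}),z\rangle+\tfrac{\rho^t}{2}\big\|w^{t+1}-z+\tfrac{1}{\rho^t}(\lambda^t_p-\xi)\big\|^2,$$ and let $$z^{t+1}_p(\mathcal{D})=\operatorname{argmin}_{z\in\mathcal{W}}\ G^t(z;\mathcal{D},\tilde\xi^t_p)+\tfrac{1}{2\eta^t}\|z-z^t_p\|^2,$$ where $\tilde\xi^t_p$ is a random vector in $\mathbb{R}^{J\times K}$ whose entries are i.i.d. Laplace with mean $0$ and scale $\bar\Delta^t_p/\bar\epsilon$, i.e. with joint density proportional to $\exp(-\bar\epsilon\|\tilde\xi^t_p\|_1/\bar\Delta^t_p)$, where $\bar\epsilon>0$ and $$\bar\Delta^t_p=\max_{\mathcal{D}'_p\in\widehat{\mathcal{D}}_p}\|f'_p(z^t_p;\mathcal{D}_p)-f'_p(z^t_p;\mathcal{D}'_p)\|_1 ,$$ the same noise distribution being used whether the input is $\mathcal{D}_p$ or a neighbouring dataset. Then for all measurable $\mathcal{S}\subset\mathbb{R}^{J\times K}$ and all $\mathcal{D}'_p\in\widehat{\mathcal{D}}_p$, $$e^{-\bar\epsilon}\,\mathbb{P}(z^{t+1}_p(\mathcal{D}'_p)\in\mathcal{S})\le\mathbb{P}(z^{t+1}_p(\mathcal{D}_p)\in\mathcal{S})\le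 e^{\bar\epsilon}\,\mathbb{P}(z^{t+1}_p(\mathcal{D}'_p)\in\mathcal{S}).$$
   Context: Setting: $P,J,K$ positive integers; matrices in $\mathbb{R}^{J\times K}$ carry the Frobenius inner product $\langle\cdot,\cdot\rangle$ and norm $\|\cdot\|$, and $\|\cdot\|_1$ is the entrywise $\ell_1$-norm. Agent $p\in[P]$ holds a dataset $\mathcal{D}_p=\{(x_{pi},y_{pi})\}_{i=1}^{I_p}$ with $x_{pi}\in\mathbb{R}^J$, $y_{pi}\in\mathbb{R}^K$; $I=\sum_{p}I_p$. Let $\varphi(\cdot;x,y)$ be a convex loss on $\mathbb{R}^{J\times K}$, $r$ a convex regularizer on $\mathbb{R}^{J\times K}$, $\beta>0$, and $f_p(z;\mathcal{D}_p)=\frac1I\sum_{i=1}^{I_p}\varphi(z;x_{pi},y_{pi})+\frac{\beta}{P}r(z)$; $f'_p(z;\mathcal{D})$ denotes a (fixed) subgradient of $f_p(\cdot;\mathcal{D})$ at $z$. $\mathcal{W}\subset\mathbb{R}^{J\times K}$ is a compact convex set written as $\mathcal{W}=\{z:h_m(z)\le0,\ m\in[M]\}$ with each $h_m$ convex and twice continuously differentiable. $\widehat{\mathcal{D}}_p$ is the collection of datasets differing from $\mathcal{D}_p$ in a single entry. The objective above is strongly convex in $z$, so the minimizer is unique. *)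

theory Defs
  imports "HOL-Probability.Probability"
begin

text \<open>Matrices in R^(J x K) are modelled as real^'k^'j (finite index types 'j, 'k);
  the Euclidean inner product / norm on this type is the Frobenius inner product / norm.\<close>

definition l1norm :: "real^'k^'j \<Rightarrow> real" where
  "l1norm A = (\<Sum>i\<in>UNIV. \<Sum>j\<in>UNIV. \<bar>A $ i $ j\<bar>)"

definition fp :: "nat \<Rightarrow> nat \<Rightarrow> real \<Rightarrow> (real^'k^'j \<Rightarrow> real^'j \<Rightarrow> real^'k \<Rightarrow> real)
    \<Rightarrow> (real^'k^'j \<Rightarrow> real) \<Rightarrow> ((real^'j) \<times> (real^'k)) list \<Rightarrow> real^'k^'j \<Rightarrow> real" where
  "fp P I \<beta> \<phi> r D z =
     (1 / real I) * (\<Sum>i<length D. \<phi> z (fst (D ! i)) (snd (D ! i))) + \<beta> / real P * r z"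

definition is_subgradient :: "('a::real_inner \<Rightarrow> real) \<Rightarrow> 'a \<Rightarrow> 'a \<Rightarrow> bool" where
  "is_subgradient f z g \<longleftrightarrow> (\<forall>y. f z + inner g (y - z) \<le> f y)"

definition neighbours :: "'a list \<Rightarrow> 'a list set" where
  "neighbours D = {D'. length D' = length D \<and>
     (\<exists>i<length D. D' ! i \<noteq> D ! i \<and> (\<forall>k<length D. k \<noteq> i \<longrightarrow> D' ! k = D ! k))}"

definition sensitivity :: "('a list \<Rightarrow> real^'k^'j) \<Rightarrow> 'a list \<Rightarrow> real" where
  "sensitivity g D = Sup ((\<lambda>D'. l1norm (g D - g D')) ` neighbours D)"

definition C2_fun :: "('a::real_normed_vector \<Rightarrow> real) \<Rightarrow> bool" where
  "C2_fun h \<longleftrightarrow> (\<exists>Dh :: 'a \<Rightarrow> ('a \<Rightarrow>\<^sub>L real). \<exists>D2h :: 'a \<Rightarrow> ('a \<Rightarrow>\<^sub>L ('a \<Rightarrow>\<^sub>L real)).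
      (\<forall>z. (h has_derivative blinfun_apply (Dh z)) (at z)) \<and>
      (\<forall>z. (Dh has_derivative blinfun_apply (D2h z)) (at z)) \<and>
      continuous_on UNIV D2h)"

text \<open>Entrywise i.i.d. Laplace(0, Delta/eps) noise on real^'k^'j; for Delta = 0 the
  degenerate (point mass at 0) distribution.\<close>
definition laplace_noise :: "real \<Rightarrow> real \<Rightarrow> (real^'k^'j) measure" where
  "laplace_noise \<epsilon> \<Delta> =
     (if \<Delta> > 0 then
        density lborel (\<lambda>\<xi>. ennreal ((\<epsilon> / (2 * \<Delta>)) ^ (CARD('j) * CARD('k))
                                      * exp (- \<epsilon> * l1norm \<xi> / \<Delta>)))
      else return borel 0)"

text \<open>G^t(z; D, xi) with g = f'_p(z^t_p; D).\<close>
definition G_obj :: "real^'k^'j \<Rightarrow> real^'k^'j \<Rightarrow> real^'k^'j \<Rightarrow> real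
    \<Rightarrow> real^'k^'j \<Rightarrow> real^'k^'j \<Rightarrow> real" where
  "G_obj g w lam \<rho> z \<xi> = inner g z + \<rho> / 2 * (norm (w - z + (1 / \<rho>) *\<^sub>R (lam - \<xi>)))\<^sup>2"

definition z_update :: "(real^'k^'j) set \<Rightarrow> real^'k^'j \<Rightarrow> real^'k^'j \<Rightarrow> real^'k^'j
    \<Rightarrow> real^'k^'j \<Rightarrow> real \<Rightarrow> real \<Rightarrow> real^'k^'j \<Rightarrow> real^'k^'j" where
  "z_update W g w lam zt \<rho> \<eta> \<xi> =
     (THE z. z \<in> W \<and> (\<forall>y\<in>W.
        G_obj g w lam \<rho> z \<xi> + 1 / (2 * \<eta>) * (norm (z - zt))\<^sup>2
          \<le> G_obj g w lam \<rho> y \<xi> + 1 / (2 * \<eta>) * (norm (y - zt))\<^sup>2))"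

end

theory Submission imports Defs begin

lemma l1_meas: "l1norm \<in> borel_measurable (borel :: (real^'k^'j) measure)"
  unfolding l1norm_def[abs_def] by (intro borel_measurable_continuous_onI continuous_intros)

lemma l1_tri: "l1norm (a + b :: real^'k^'j) \<le> l1norm a + l1norm b"
  unfolding l1norm_def by (simp add: sum.distrib[symmetric] abs_triangle_ineq sum_mono)

lemma l1_zero: "l1norm (a :: real^'k^'j) \<le> 0 \<Longrightarrow> a = 0"
proof -
  assume h: "l1norm a \<le> 0"
  have "\<forall>i\<in>UNIV. (\<Sum>j\<in>UNIV. \<bar>a $ i $ j\<bar>) = 0"
    using h unfolding l1norm_def
    by (subst sum_nonneg_eq_0_iff[symmetric]) (auto intro: sum_nonneg antisym)
  then have "\<forall>i j. a $ i $ j = 0" by (simp add: sum_nonneg_eq_0_iff)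
  then show "a = 0" by (simp add: vec_eq_iff)
qed

lemma G_expand:
  assumes "\<rho> > 0"
  shows "G_obj g w lam \<rho> z \<xi> = inner (g + \<xi>) z + \<rho> / 2 * (norm (w + (1/\<rho>) *\<^sub>R lam - z))\<^sup>2
     - inner (w + (1/\<rho>) *\<^sub>R lam) \<xi> + (norm \<xi>)\<^sup>2 / (2 * \<rho>)"
proof -
  define u where "u = w + (1/\<rho>) *\<^sub>R lam"
  have e: "w - z + (1 / \<rho>) *\<^sub>R (lam - \<xi>) = (u - z) - (1/\<rho>) *\<^sub>R \<xi>"
    by (simp add: u_def algebra_simps)
  have "(norm ((u - z) - (1/\<rho>) *\<^sub>R \<xi>))\<^sup>2 = (norm (u - z))\<^sup>2 - 2 / \<rho> * inner (u - z) \<xi> + (norm \<xi>)\<^sup>2 / \<rho>^2"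
    unfolding power2_norm_eq_inner by (simp add: inner_diff_left inner_diff_right algebra_simps power2_eq_square inner_commute)
  then show ?thesis unfolding G_obj_def e u_def[symmetric]
    using assms by (simp add: field_simps inner_diff_left inner_add_left inner_add_right inner_diff_right power2_eq_square inner_commute)
qed

lemma z_shift:
  assumes "\<rho> > 0"
  shows "z_update W g w lam zt \<rho> \<eta> \<xi> = z_update W g' w lam zt \<rho> \<eta> (\<xi> + (g - g'))"
proof -
  define K where "K = ((norm \<xi>)\<^sup>2 / (2 * \<rho>) - inner (w + (1/\<rho>) *\<^sub>R lam) \<xi>
        - ((norm (\<xi> + (g - g')))\<^sup>2 / (2 * \<rho>) - inner (w + (1/\<rho>) *\<^sub>R lam) (\<xi> + (g - g'))))"
  have hK: "\<And>z. G_obj g w lam \<rho> z \<xi> = G_obj g' w lam \<rho> z (\<xi> + (g - g'))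
     + ((norm \<xi>)\<^sup>2 / (2 * \<rho>) - inner (w + (1/\<rho>) *\<^sub>R lam) \<xi>
        - ((norm (\<xi> + (g - g')))\<^sup>2 / (2 * \<rho>) - inner (w + (1/\<rho>) *\<^sub>R lam) (\<xi> + (g - g'))))"
    unfolding G_expand[OF assms] by (simp add: algebra_simps)
  have hK2: "\<And>z. G_obj g w lam \<rho> z \<xi> = G_obj g' w lam \<rho> z (\<xi> + (g - g')) + K"
    using hK unfolding K_def by simp
  show ?thesis unfolding z_update_def hK2 by simp
qed

lemma enn_ratio:
  assumes "x \<le> ennreal e * y" "y \<le> ennreal e * x" "e > 0"
  shows "enn2real x \<le> e * enn2real y"
proof (cases "y = top")
  case True
  then have "x = top" using assms(2,3)
    by (metis ennreal_mult_eq_top_iff ennreal_neq_top top.extremum_uniqueI)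
  then show ?thesis using True by simp
next
  case False
  then have "enn2real x \<le> enn2real (ennreal e * y)"
    using assms by (intro enn2real_mono) (auto simp: ennreal_mult_eq_top_iff top.not_eq_extremum[symmetric])
  then show ?thesis using assms(3) by (simp add: enn2real_mult)
qed

lemma l1_neg: "l1norm (- a :: real^'k^'j) = l1norm a"
  unfolding l1norm_def by simp

lemma trans_bound:
  fixes d :: "real^'k^'j" and Q :: "real^'k^'j \<Rightarrow> bool"
  assumes D: "\<Delta> > 0" and hd: "l1norm d \<le> \<Delta>" and e: "\<epsilon> > 0"
  defines "f \<equiv> (\<lambda>\<xi>::real^'k^'j. ennreal ((\<epsilon> / (2 * \<Delta>)) ^ (CARD('j) * CARD('k))
                                      * exp (- \<epsilon> * l1norm \<xi> / \<Delta>)))"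
  shows "emeasure (density lborel f) {\<xi>. Q (\<xi> + d)} \<le> ennreal (exp \<epsilon>) * emeasure (density lborel f) {\<xi>. Q \<xi>}"
proof (cases "{\<xi>. Q \<xi>} \<in> sets borel")
  case False
  have "{\<xi>. Q (\<xi> + d)} \<notin> sets borel"
  proof
    assume h: "{\<xi>. Q (\<xi> + d)} \<in> sets borel"
    have m: "(\<lambda>x::real^'k^'j. x - d) \<in> borel_measurable borel" by measurable
    have "(\<lambda>x. x - d) -` {\<xi>. Q (\<xi> + d)} \<inter> space borel \<in> sets borel"
      using measurable_sets[OF m h] by simp
    also have "(\<lambda>x. x - d) -` {\<xi>. Q (\<xi> + d)} \<inter> space borel = {\<xi>. Q \<xi>}" by auto
    finally show False using False by simp
  qed
  then show ?thesis by (simp add: emeasure_notin_sets)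
next
  case True
  let ?A = "{\<xi>. Q \<xi>}"
  have fm: "f \<in> borel_measurable borel" unfolding f_def
    using l1_meas by measurable
  have Bm: "{\<xi>. Q (\<xi> + d)} \<in> sets borel"
  proof -
    have m: "(\<lambda>x::real^'k^'j. x + d) \<in> borel_measurable borel" by measurable
    have "(\<lambda>x. x + d) -` ?A \<inter> space borel \<in> sets borel"
      using measurable_sets[OF m True] by simp
    moreover have "(\<lambda>x. x + d) -` ?A \<inter> space borel = {\<xi>. Q (\<xi> + d)}" by auto
    ultimately show ?thesis by simp
  qed
  have "emeasure (density lborel f) {\<xi>. Q (\<xi> + d)} = (\<integral>\<^sup>+ x. f x * indicator {\<xi>. Q (\<xi> + d)} x \<partial>lborel)"
    using Bm fm by (subst emeasure_density) auto
  also have "\<dots> = (\<integral>\<^sup>+ x. f ((d + x) - d) * indicator ?A (d + x) \<partial>lborel)"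
    by (intro nn_integral_cong) (auto simp: indicator_def algebra_simps)
  also have "\<dots> = (\<integral>\<^sup>+ y. f (y - d) * indicator ?A y \<partial>distr lborel borel ((+) d))"
    using fm True by (subst nn_integral_distr) auto
  also have "\<dots> = (\<integral>\<^sup>+ y. f (y - d) * indicator ?A y \<partial>lborel)"
    by (simp add: lborel_distr_plus)
  also have "\<dots> \<le> (\<integral>\<^sup>+ y. ennreal (exp \<epsilon>) * (f y * indicator ?A y) \<partial>lborel)"
  proof (intro nn_integral_mono)
    fix y :: "real^'k^'j"
    have c0: "(\<epsilon> / (2 * \<Delta>)) ^ (CARD('j) * CARD('k)) \<ge> 0" using D e by simp
    have tri: "l1norm y \<le> l1norm (y - d) + l1norm d"
      using l1_tri[of "y - d" d] by simp
    have "- \<epsilon> * l1norm (y - d) / \<Delta> \<le> \<epsilon> + - \<epsilon> * l1norm y / \<Delta>"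
    proof -
      have "\<epsilon> * l1norm y \<le> \<epsilon> * l1norm (y - d) + \<epsilon> * \<Delta>"
        using tri hd e by (smt (verit, ccfv_SIG) mult_left_mono distrib_left)
      then show ?thesis using D by (simp add: field_simps)
    qed
    then have "exp (- \<epsilon> * l1norm (y - d) / \<Delta>) \<le> exp \<epsilon> * exp (- \<epsilon> * l1norm y / \<Delta>)"
      by (simp add: exp_add[symmetric])
    then have "(\<epsilon> / (2 * \<Delta>)) ^ (CARD('j) * CARD('k)) * exp (- \<epsilon> * l1norm (y - d) / \<Delta>)
        \<le> exp \<epsilon> * ((\<epsilon> / (2 * \<Delta>)) ^ (CARD('j) * CARD('k)) * exp (- \<epsilon> * l1norm y / \<Delta>))"
      using c0 by (metis mult.left_commute mult_left_mono)
    then have "f (y - d) \<le> ennreal (exp \<epsilon>) * f y"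
      unfolding f_def using c0 by (simp add: ennreal_mult'[symmetric])
    then show "f (y - d) * indicator ?A y \<le> ennreal (exp \<epsilon>) * (f y * indicator ?A y)"
      by (simp add: indicator_def)
  qed
  also have "\<dots> = ennreal (exp \<epsilon>) * (\<integral>\<^sup>+ y. f y * indicator ?A y \<partial>lborel)"
    using fm True by (subst nn_integral_cmult) auto
  also have "\<dots> = ennreal (exp \<epsilon>) * emeasure (density lborel f) ?A"
    using fm True by (subst emeasure_density) auto
  finally show ?thesis .
qed

theorem theorem1:
  fixes P I M :: nat and \<beta> \<rho> \<eta> \<epsilon> :: real
    and \<phi> :: "real^'k^'j \<Rightarrow> real^'j \<Rightarrow> real^'k \<Rightarrow> real"
    and r :: "real^'k^'j \<Rightarrow> real"
    and fp' :: "real^'k^'j \<Rightarrow> ((real^'j) \<times> (real^'k)) list \<Rightarrow> real^'k^'j"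
    and h :: "nat \<Rightarrow> real^'k^'j \<Rightarrow> real"
    and W :: "(real^'k^'j) set"
    and w lam zt :: "real^'k^'j"
    and Dp Dp' :: "((real^'j) \<times> (real^'k)) list"
    and S :: "(real^'k^'j) set"
  assumes "P > 0" and "I > 0" and "length Dp \<le> I" and "\<beta> > 0"
    and "\<And>x y. convex_on UNIV (\<lambda>z. \<phi> z x y)"
    and "convex_on UNIV r"
    and "\<And>D z. is_subgradient (fp P I \<beta> \<phi> r D) z (fp' z D)"
    and "W = {z. \<forall>m<M. h m z \<le> 0}"
    and "\<And>m. m < M \<Longrightarrow> convex_on UNIV (h m) \<and> C2_fun (h m)"
    and "compact W" and "convex W" and "W \<noteq> {}"
    and "\<rho> > 0" and "\<eta> > 0" and "\<epsilon> > 0"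
    and "bdd_above ((\<lambda>D'. l1norm (fp' zt Dp - fp' zt D')) ` neighbours Dp)"
    and "Dp' \<in> neighbours Dp"
    and "S \<in> sets borel"
  shows "let \<Delta> = sensitivity (fp' zt) Dp;
             N = (laplace_noise \<epsilon> \<Delta> :: (real^'k^'j) measure);
             pr = (\<lambda>D. measure N {\<xi> \<in> space N. z_update W (fp' zt D) w lam zt \<rho> \<eta> \<xi> \<in> S})
         in exp (- \<epsilon>) * pr Dp' \<le> pr Dp \<and> pr Dp \<le> exp \<epsilon> * pr Dp'"
proof -
  define g where "g = fp' zt Dp"
  define g' where "g' = fp' zt Dp'"
  define d where "d = g - g'"
  define \<Delta> where "\<Delta> = sensitivity (fp' zt) Dp"
  define N where "N = (laplace_noise \<epsilon> \<Delta> :: (real^'k^'j) measure)"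
  define F where "F = z_update W g' w lam zt \<rho> \<eta>"
  have hd: "l1norm d \<le> \<Delta>"
    unfolding d_def g_def g'_def \<Delta>_def sensitivity_def
    using assms(16,17) by (intro cSup_upper) auto
  have sp: "space N = UNIV" unfolding N_def laplace_noise_def by simp
  have sh: "\<And>\<xi>. z_update W g w lam zt \<rho> \<eta> \<xi> = F (\<xi> + d)"
    unfolding F_def d_def using z_shift[OF assms(13)] by blast
  define a where "a = measure N {\<xi>. F \<xi> \<in> S}"
  define b where "b = measure N {\<xi>. F (\<xi> + d) \<in> S}"
  have pa: "measure N {\<xi> \<in> space N. z_update W (fp' zt Dp') w lam zt \<rho> \<eta> \<xi> \<in> S} = a"
    unfolding a_def sp F_def g'_def by simp
  have pb: "measure N {\<xi> \<in> space N. z_update W (fp' zt Dp) w lam zt \<rho> \<eta> \<xi> \<in> S} = b"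
    unfolding b_def sp sh[unfolded g_def] by simp
  have key: "a \<le> exp \<epsilon> * b \<and> b \<le> exp \<epsilon> * a"
  proof (cases "\<Delta> > 0")
    case False
    then have "d = 0" using hd l1_zero by force
    then have "a = b" unfolding a_def b_def by simp
    moreover have "a \<ge> 0" unfolding a_def by simp
    moreover have "exp \<epsilon> \<ge> 1" using assms(15) by simp
    ultimately show ?thesis using mult_right_mono[of 1 "exp \<epsilon>" a] by simp
  next
    case True
    let ?f = "(\<lambda>\<xi>::real^'k^'j. ennreal ((\<epsilon> / (2 * \<Delta>)) ^ (CARD('j) * CARD('k))
                                      * exp (- \<epsilon> * l1norm \<xi> / \<Delta>)))"
    have N: "N = density lborel ?f" unfolding N_def laplace_noise_def by (rule if_P[OF True])
    have h1: "emeasure N {\<xi>. F (\<xi> + d) \<in> S} \<le> ennreal (exp \<epsilon>) * emeasure N {\<xi>. F \<xi> \<in> S}"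
      unfolding N using trans_bound[OF True hd assms(15), of "\<lambda>x. F x \<in> S"] by simp
    have hd': "l1norm (- d) \<le> \<Delta>" using hd l1_neg[of d] by simp
    have h2: "emeasure N {\<xi>. F \<xi> \<in> S} \<le> ennreal (exp \<epsilon>) * emeasure N {\<xi>. F (\<xi> + d) \<in> S}"
      unfolding N using trans_bound[OF True hd' assms(15), of "\<lambda>x. F (x + d) \<in> S"] by simp
    show ?thesis unfolding a_def b_def measure_def
      using enn_ratio[OF h1 h2] enn_ratio[OF h2 h1] by simp
  qed
  have "exp (- \<epsilon>) * a \<le> b"
  proof -
    have "exp (- \<epsilon>) * a \<le> exp (- \<epsilon>) * (exp \<epsilon> * b)" using key by simp
    also have "\<dots> = b" by (simp add: exp_minus field_simps)
    finally show ?thesis .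
  qed
  then show ?thesis unfolding Let_def \<Delta>_def[symmetric] N_def[symmetric] pa pb using key by simp
qed

end
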